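(* Let $\boldsymbol\eta$ be a standard max-stable process with generator $\mathbf Z$, and let $G(f)=P(\boldsymbol\eta\le f)=\exp(-\|f\|_D)$, $f\in\bar E^-[0,1]$, be its functional distribution function. Then: (i) $G$ is continuous with respect to the sup-norm $\|\cdot\|_\infty$; (ii) for every $f\in\bar E^-[0,1]$ we have $P(\boldsymbol\eta\le f)=P(\boldsymbol\eta<f)$; in particular, the sets $\{g\in\bar C^-[0,1]: g(t)\le f(t)\text{ for all }t\in[0,1]\}$ are continuity sets of the distribution of $\boldsymbol\eta$ on $(\bar C^-[0,1],\|\cdot\|_\infty)$.
   Context: $E[0,1]$: bounded functions on $[0,1]$ with finitely many discontinuities; $\bar E^-[0,1]=\{f\in E[0,1]:f\le 0\}$; $\bar C^-[0,1]=\{f\in C[0,1]:f\le 0\}$. $\boldsymbol\eta\le f$ (resp. $<$) means $\eta_t\le f(t)$ (resp. $<$) for all $t\in[0,1]$. A generator is a process $\mathbf Z$ with continuous nonnegative paths, $\max_t Z_t=m$ a.s. for a constant $m\in[1,\infty)$, and $E(Z_t)=1$ for all $t$; the $D$-norm is $\|f\|_D=E(\sup_{t\in[0,1]}(|f(t)|Z_t))$. A standard max-stable process with generator $\mathbf Z$ is a process with paths in $\bar C^-[0,1]$ that is max-stable (for iid copies $\boldsymbol\eta_i$ and each $n$ there are $a_n>0,b_n\in C[0,1]$ with $\boldsymbol\eta=_D\max_{i\le n}(\boldsymbol\eta_i-b_n)/a_n$), has margins $P(\eta_t\le x)=e^x$, $x\le0$, and satisfies $P(\max_{t\in K_j}\eta_t\le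 x_j,1\le j\le d)=\exp(-E(\max_j|x_j|\max_{t\in K_j}Z_t))$ for compact $K_j\subset[0,1]$, $x_j\le 0$; equivalently $P(\boldsymbol\eta\le f)=\exp(-\|f\|_D)$ for $f\in\bar E^-[0,1]$. *)

theory Defs
  imports "HOL-Probability.Probability"
begin

text \<open>Functions on [0,1] are represented as real => real; only values on {0..1} matter.\<close>

definition E01 :: "(real \<Rightarrow> real) \<Rightarrow> bool" where
  "E01 f \<longleftrightarrow> bounded (f ` {0..1}) \<and>
     finite {t \<in> {0..1}. \<not> continuous (at t within {0..1}) f}"

definition Eneg :: "(real \<Rightarrow> real) set" where
  "Eneg = {f. E01 f \<and> (\<forall>t\<in>{0..1}. f t \<le> 0)}"

definition Cneg :: "(real \<Rightarrow> real) set" where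
  "Cneg = {g. continuous_on {0..1} g \<and> (\<forall>t\<in>{0..1}. g t \<le> 0)}"

definition supdist :: "(real \<Rightarrow> real) \<Rightarrow> (real \<Rightarrow> real) \<Rightarrow> real" where
  "supdist g h = (SUP t\<in>{0..1}. \<bar>g t - h t\<bar>)"

definition rel_boundary_sup :: "(real \<Rightarrow> real) set \<Rightarrow> (real \<Rightarrow> real) set \<Rightarrow> (real \<Rightarrow> real) set" where
  "rel_boundary_sup S A = {g \<in> S. \<forall>e>0. (\<exists>h\<in>S \<inter> A. supdist g h < e) \<and> (\<exists>h\<in>S - A. supdist g h < e)}"

definition generator :: "'b measure \<Rightarrow> ('b \<Rightarrow> real \<Rightarrow> real) \<Rightarrow> real \<Rightarrow> bool" where
  "generator N Z m \<longleftrightarrow> prob_space N \<and> 1 \<le> m \<and>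
     (\<forall>\<omega>\<in>space N. continuous_on {0..1} (Z \<omega>) \<and> (\<forall>t\<in>{0..1}. 0 \<le> Z \<omega> t)) \<and>
     (AE \<omega> in N. (SUP t\<in>{0..1}. Z \<omega> t) = m) \<and>
     (\<forall>t\<in>{0..1}. (\<lambda>\<omega>. Z \<omega> t) \<in> borel_measurable N \<and> integrable N (\<lambda>\<omega>. Z \<omega> t) \<and>
        (\<integral>\<omega>. Z \<omega> t \<partial>N) = 1)"

definition Dnorm :: "'b measure \<Rightarrow> ('b \<Rightarrow> real \<Rightarrow> real) \<Rightarrow> (real \<Rightarrow> real) \<Rightarrow> real" where
  "Dnorm N Z f = (\<integral>\<omega>. (SUP t\<in>{0..1}. \<bar>f t\<bar> * Z \<omega> t) \<partial>N)"

text \<open>Max-stability is expressed through the finite-dimensional distribution functions: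
  for iid copies, P(max_i (eta_i - b)/a \<le> x on ts) = P(eta \<le> a x + b on ts)^n.\<close>
definition std_max_stable :: "'a measure \<Rightarrow> ('a \<Rightarrow> real \<Rightarrow> real) \<Rightarrow> 'b measure \<Rightarrow> ('b \<Rightarrow> real \<Rightarrow> real) \<Rightarrow> bool" where
  "std_max_stable M eta N Z \<longleftrightarrow> prob_space M \<and>
     (\<forall>t\<in>{0..1}. (\<lambda>\<omega>. eta \<omega> t) \<in> borel_measurable M) \<and>
     (\<forall>\<omega>\<in>space M. eta \<omega> \<in> Cneg) \<and>
     (\<forall>n::nat. n \<ge> 1 \<longrightarrow> (\<exists>a>0. \<exists>b. continuous_on {0..1} b \<and>
        (\<forall>(k::nat) (ts::nat \<Rightarrow> real) (x::nat \<Rightarrow> real). (\<forall>j<k. ts j \<in> {0..1}) \<longrightarrow>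
           measure M {\<omega>\<in>space M. \<forall>j<k. eta \<omega> (ts j) \<le> x j}
           = (measure M {\<omega>\<in>space M. \<forall>j<k. eta \<omega> (ts j) \<le> a * x j + b (ts j)}) ^ n))) \<and>
     (\<forall>t\<in>{0..1}. \<forall>x\<le>0. measure M {\<omega>\<in>space M. eta \<omega> t \<le> x} = exp x) \<and>
     (\<forall>(d::nat) (K::nat \<Rightarrow> real set) (x::nat \<Rightarrow> real).
        d \<ge> 1 \<and> (\<forall>j<d. compact (K j) \<and> K j \<noteq> {} \<and> K j \<subseteq> {0..1} \<and> x j \<le> 0) \<longrightarrow>
        measure M {\<omega>\<in>space M. \<forall>j<d. (SUP t\<in>K j. eta \<omega> t) \<le> x j}
        = exp (- (\<integral>\<omega>. (MAX j\<in>{..<d}. \<bar>x j\<bar> * (SUP t\<in>K j. Z \<omega> t)) \<partial>N)))"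

end

theory Submission imports Defs begin

lemma rat_near:
  fixes lo hi t d :: real
  assumes "lo < hi" "t \<in> {lo..hi}" "d > 0"
  shows "\<exists>s\<in>\<rat>. s \<in> {lo..hi} \<and> \<bar>s - t\<bar> < d"
proof (cases "t < hi")
  case True
  then obtain s where "s \<in> \<rat>" "t < s" "s < min (t + d) hi"
    using Rats_dense_in_real[of t "min (t+d) hi"] assms by auto
  then show ?thesis using assms by (intro bexI[of _ s]) auto
next
  case False
  then have "t = hi" using assms by auto
  then obtain s where "s \<in> \<rat>" "max (t - d) lo < s" "s < t"
    using Rats_dense_in_real[of "max (t - d) lo" t] assms by auto
  then show ?thesis using assms \<open>t = hi\<close> by (intro bexI[of _ s]) auto
qed

lemma cont_rat:
  fixes \<phi> :: "real \<Rightarrow> real"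
  assumes "continuous (at t within S) \<phi>" "{lo..hi} \<subseteq> S" "lo < hi" "t \<in> {lo..hi}" "\<phi> t < c"
  shows "\<exists>s\<in>\<rat>. s \<in> {lo..hi} \<and> \<phi> s < c"
proof -
  obtain d where d: "d > 0" "\<And>x. x \<in> S \<Longrightarrow> dist x t < d \<Longrightarrow> dist (\<phi> x) (\<phi> t) < c - \<phi> t"
    using assms(1) assms(5) unfolding continuous_within_eps_delta by (metis diff_gt_0_iff_gt)
  obtain s where s: "s \<in> \<rat>" "s \<in> {lo..hi}" "\<bar>s - t\<bar> < d"
    using rat_near[OF assms(3,4) d(1)] by blast
  have "dist (\<phi> s) (\<phi> t) < c - \<phi> t" using d(2)[of s] s assms(2) by (auto simp: dist_real_def)
  then have "\<phi> s < c" by (auto simp: dist_real_def)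
  then show ?thesis using s by blast
qed

lemma sup_eq_R:
  fixes \<phi> :: "real \<Rightarrow> real"
  assumes bdd: "bdd_above (\<phi> ` {0..1})"
    and cont: "\<And>t. t \<in> {0..1} \<Longrightarrow> t \<notin> D \<Longrightarrow> continuous (at t within {0..1}) \<phi>"
    and D: "D \<subseteq> {0..1}"
  shows "(SUP t\<in>{0..1}. \<phi> t) = (SUP t\<in>(\<rat> \<inter> {0..1}) \<union> D. \<phi> t)"
proof (rule antisym)
  let ?R = "(\<rat> \<inter> {0..1}) \<union> D"
  have R: "?R \<subseteq> {0..1}" "?R \<noteq> {}" using D by auto
  have bddR: "bdd_above (\<phi> ` ?R)" using bdd R by (meson bdd_above_mono image_mono)
  show "(SUP t\<in>?R. \<phi> t) \<le> (SUP t\<in>{0..1}. \<phi> t)"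
    using cSUP_subset_mono[OF R(2) bdd R(1), of \<phi>] by simp
  show "(SUP t\<in>{0..1}. \<phi> t) \<le> (SUP t\<in>?R. \<phi> t)"
  proof (rule cSUP_least)
    show "{0..1::real} \<noteq> {}" by auto
    fix t :: real assume t: "t \<in> {0..1}"
    show "\<phi> t \<le> (SUP t\<in>?R. \<phi> t)"
    proof (cases "t \<in> D")
      case True then show ?thesis using bddR by (intro cSUP_upper) auto
    next
      case False
      show ?thesis
      proof (rule ccontr)
        assume "\<not> ?thesis"
        then have "(\<lambda>s. - \<phi> s) t < - (SUP t\<in>?R. \<phi> t)" by simp
        moreover have "continuous (at t within {0..1}) (\<lambda>s. - \<phi> s)"
          using cont[OF t False] by (intro continuous_minus)
        ultimately obtain s where "s \<in> \<rat>" "s \<in> {0..1}" "- \<phi> s < - (SUP t\<in>?R. \<phi> t)"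
          using cont_rat[of t "{0..1}" "\<lambda>s. - \<phi> s" 0 1 "- (SUP t\<in>?R. \<phi> t)"] t by auto
        moreover have "\<phi> s \<le> (SUP t\<in>?R. \<phi> t)" using bddR \<open>s \<in> \<rat>\<close> \<open>s \<in> {0..1}\<close>
          by (intro cSUP_upper) auto
        ultimately show False by simp
      qed
    qed
  qed
qed

lemma supdist_bound:
  assumes "bounded (g ` {0..1})" "bounded (f ` {0..1})" "t \<in> {0..1}"
  shows "\<bar>g t - f t\<bar> \<le> supdist g f"
proof -
  obtain B1 where "\<forall>x\<in>{0..1}. \<bar>g x\<bar> \<le> B1" using assms(1) by (auto simp: bounded_iff)
  moreover obtain B2 where "\<forall>x\<in>{0..1}. \<bar>f x\<bar> \<le> B2" using assms(2) by (auto simp: bounded_iff)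
  ultimately have "bdd_above ((\<lambda>t. \<bar>g t - f t\<bar>) ` {0..1})"
    by (intro bdd_aboveI[of _ "B1 + B2"]) (smt (verit) imageE)
  then show ?thesis unfolding supdist_def using assms(3) by (intro cSUP_upper) auto
qed

lemma exp_lip:
  fixes a b :: real
  assumes "0 \<le> a" "0 \<le> b"
  shows "\<bar>exp (-a) - exp (-b)\<bar> \<le> \<bar>a - b\<bar>"
proof -
  have *: "exp (-x) - exp (-y) \<le> y - x" if "0 \<le> x" "x \<le> y" for x y :: real
  proof -
    have "exp (-x) - exp (-y) = exp (-x) * (1 - exp (-(y - x)))" by (simp add: algebra_simps flip: exp_add)
    also have "\<dots> \<le> 1 * (1 - exp (-(y-x)))"
      using that by (intro mult_right_mono) auto
    also have "\<dots> \<le> y - x" using exp_ge_add_one_self[of "-(y-x)"] by (simp add: algebra_simps)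
    finally show ?thesis .
  qed
  show ?thesis using *[of a b] *[of b a] assms by (cases "a \<le> b") auto
qed


lemma gen_facts:
  assumes "generator N Z m"
  shows "prob_space N" "1 \<le> m"
    "\<And>\<omega>. \<omega> \<in> space N \<Longrightarrow> continuous_on {0..1} (Z \<omega>)"
    "\<And>\<omega> t. \<omega> \<in> space N \<Longrightarrow> t \<in> {0..1} \<Longrightarrow> 0 \<le> Z \<omega> t"
    "AE \<omega> in N. (SUP t\<in>{0..1}. Z \<omega> t) = m"
    "\<And>t. t \<in> {0..1} \<Longrightarrow> (\<lambda>\<omega>. Z \<omega> t) \<in> borel_measurable N"
  using assms unfolding generator_def by auto

lemma Z_bdd:
  assumes "generator N Z m" "\<omega> \<in> space N"
  shows "bdd_above (Z \<omega> ` {0..1})"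
proof -
  have "compact (Z \<omega> ` {0..1})"
    using gen_facts(3)[OF assms] by (intro compact_continuous_image) auto
  then show ?thesis by (intro bounded_imp_bdd_above compact_imp_bounded)
qed

lemma Z_le:
  assumes "generator N Z m" "\<omega> \<in> space N" "t \<in> {0..1}"
  shows "Z \<omega> t \<le> (SUP t\<in>{0..1}. Z \<omega> t)"
  using Z_bdd[OF assms(1,2)] assms(3) by (intro cSUP_upper) auto

lemma E01_bound:
  assumes "E01 f"
  obtains B where "B \<ge> 0" "\<And>t. t \<in> {0..1} \<Longrightarrow> \<bar>f t\<bar> \<le> B"
proof -
  obtain B where "\<forall>x\<in>{0..1}. \<bar>f x\<bar> \<le> B" using assms unfolding E01_def by (auto simp: bounded_iff)
  then show ?thesis using that[of B] by (metis abs_ge_zero atLeastAtMost_iff order_trans zero_le_one order_refl)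
qed

definition FF :: "('b \<Rightarrow> real \<Rightarrow> real) \<Rightarrow> (real \<Rightarrow> real) \<Rightarrow> 'b \<Rightarrow> real" where
  "FF Z f \<omega> = (SUP t\<in>{0..1}. \<bar>f t\<bar> * Z \<omega> t)"

lemma FF_bdd:
  assumes "generator N Z m" "\<omega> \<in> space N" "E01 f"
  shows "bdd_above ((\<lambda>t. \<bar>f t\<bar> * Z \<omega> t) ` {0..1})"
proof -
  obtain B where B: "B \<ge> 0" "\<And>t. t \<in> {0..1} \<Longrightarrow> \<bar>f t\<bar> \<le> B" using E01_bound[OF assms(3)] by blast
  show ?thesis
  proof (rule bdd_aboveI2)
    fix t :: real assume t: "t \<in> {0..1}"
    show "\<bar>f t\<bar> * Z \<omega> t \<le> B * (SUP t\<in>{0..1}. Z \<omega> t)"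
      using B t Z_le[OF assms(1,2) t] gen_facts(4)[OF assms(1,2) t]
      by (intro mult_mono) auto
  qed
qed

lemma FF_upper:
  assumes "generator N Z m" "\<omega> \<in> space N" "E01 f" "t \<in> {0..1}"
  shows "\<bar>f t\<bar> * Z \<omega> t \<le> FF Z f \<omega>"
  unfolding FF_def using FF_bdd[OF assms(1-3)] assms(4) by (intro cSUP_upper) auto

lemma FF_nonneg:
  assumes "generator N Z m" "\<omega> \<in> space N" "E01 f"
  shows "0 \<le> FF Z f \<omega>"
  using FF_upper[OF assms, of 0] gen_facts(4)[OF assms(1,2), of 0] by (smt (verit) atLeastAtMost_iff mult_nonneg_nonneg abs_ge_zero)

lemma FF_le_bound:
  assumes "generator N Z m" "\<omega> \<in> space N" "E01 f" "B \<ge> 0" "\<And>t. t \<in> {0..1} \<Longrightarrow> \<bar>f t\<bar> \<le> B"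
  shows "FF Z f \<omega> \<le> B * (SUP t\<in>{0..1}. Z \<omega> t)"
  unfolding FF_def
proof (rule cSUP_least)
  fix t :: real assume t: "t \<in> {0..1}"
  show "\<bar>f t\<bar> * Z \<omega> t \<le> B * (SUP t\<in>{0..1}. Z \<omega> t)"
    using assms t Z_le[OF assms(1,2) t] gen_facts(4)[OF assms(1,2) t]
    by (intro mult_mono) auto
qed auto

lemma FF_lip:
  assumes "generator N Z m" "\<omega> \<in> space N" "E01 f" "E01 g"
  shows "FF Z g \<omega> \<le> FF Z f \<omega> + supdist g f * (SUP t\<in>{0..1}. Z \<omega> t)"
  unfolding FF_def[of Z g]
proof (rule cSUP_least)
  fix t :: real assume t: "t \<in> {0..1}"
  have d: "\<bar>g t - f t\<bar> \<le> supdist g f"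
    using assms(3,4) t by (intro supdist_bound) (auto simp: E01_def)
  have z: "0 \<le> Z \<omega> t" "Z \<omega> t \<le> (SUP t\<in>{0..1}. Z \<omega> t)"
    using gen_facts(4)[OF assms(1,2) t] Z_le[OF assms(1,2) t] by auto
  have "\<bar>g t\<bar> * Z \<omega> t \<le> (\<bar>f t\<bar> + \<bar>g t - f t\<bar>) * Z \<omega> t"
    using z by (intro mult_right_mono) auto
  also have "\<dots> = \<bar>f t\<bar> * Z \<omega> t + \<bar>g t - f t\<bar> * Z \<omega> t" by (simp add: algebra_simps)
  also have "\<dots> \<le> FF Z f \<omega> + supdist g f * (SUP t\<in>{0..1}. Z \<omega> t)"
    using FF_upper[OF assms(1-3) t] d z
    by (intro add_mono mult_mono) auto
  finally show "\<bar>g t\<bar> * Z \<omega> t \<le> FF Z f \<omega> + supdist g f * (SUP t\<in>{0..1}. Z \<omega> t)" .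
qed auto

lemma FF_meas:
  assumes gen: "generator N Z m" and f: "E01 f"
  shows "FF Z f \<in> borel_measurable N"
proof -
  let ?D = "{t \<in> {0..1}. \<not> continuous (at t within {0..1}) f}"
  let ?R = "(\<rat> \<inter> {0..1}) \<union> ?D"
  have cQ: "countable (\<rat> \<inter> {0..1::real})" by (rule countable_subset[OF _ countable_rat]) auto
  have cR: "countable ?R" using f unfolding E01_def
    by (intro countable_Un[OF cQ] countable_finite) auto
  have eq: "FF Z f \<omega> = (SUP t\<in>?R. \<bar>f t\<bar> * Z \<omega> t)" if \<omega>: "\<omega> \<in> space N" for \<omega>
    unfolding FF_def
  proof (rule sup_eq_R)
    show "bdd_above ((\<lambda>t. \<bar>f t\<bar> * Z \<omega> t) ` {0..1})" using FF_bdd[OF gen \<omega> f] .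
    fix t :: real assume t: "t \<in> {0..1}" "t \<notin> ?D"
    then have "continuous (at t within {0..1}) f" by auto
    moreover have "continuous (at t within {0..1}) (Z \<omega>)"
      using gen_facts(3)[OF gen \<omega>] t(1) by (simp add: continuous_on_eq_continuous_within)
    ultimately show "continuous (at t within {0..1}) (\<lambda>t. \<bar>f t\<bar> * Z \<omega> t)"
      by (intro continuous_mult continuous_rabs)
  qed auto
  have "(\<lambda>\<omega>. SUP t\<in>?R. \<bar>f t\<bar> * Z \<omega> t) \<in> borel_measurable N"
  proof (rule borel_measurable_cSUP[OF cR])
    fix t assume "t \<in> ?R"
    then have "t \<in> {0..1}" by auto
    then show "(\<lambda>\<omega>. \<bar>f t\<bar> * Z \<omega> t) \<in> borel_measurable N"
      using gen_facts(6)[OF gen] by measurable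
  next
    fix \<omega> assume \<omega>: "\<omega> \<in> space N"
    show "bdd_above ((\<lambda>t. \<bar>f t\<bar> * Z \<omega> t) ` ?R)"
      using FF_bdd[OF gen \<omega> f] by (rule bdd_above_mono) auto
  qed
  then show ?thesis using eq by (subst measurable_cong) auto
qed

lemma FF_integrable:
  assumes gen: "generator N Z m" and f: "E01 f"
  shows "integrable N (FF Z f)"
proof -
  interpret prob_space N using gen_facts(1)[OF gen] .
  obtain B where B: "B \<ge> 0" "\<And>t. t \<in> {0..1} \<Longrightarrow> \<bar>f t\<bar> \<le> B" using E01_bound[OF f] by blast
  show ?thesis
  proof (rule Bochner_Integration.integrable_bound[where f="\<lambda>_. B * m"])
    show "integrable N (\<lambda>_. B * m)" by simp
    show "FF Z f \<in> borel_measurable N" by (rule FF_meas[OF gen f])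
    show "AE x in N. norm (FF Z f x) \<le> norm (B * m)"
      using gen_facts(5)[OF gen] AE_space
    proof eventually_elim
      case (elim \<omega>)
      then show ?case using FF_nonneg[OF gen _ f, of \<omega>] FF_le_bound[OF gen _ f B, of \<omega>] gen_facts(2)[OF gen] B(1)
        by auto
    qed
  qed
qed


lemma Dnorm_FF: "Dnorm N Z f = integral\<^sup>L N (FF Z f)"
  unfolding Dnorm_def FF_def by simp

lemma supdist_sym: "supdist g f = supdist f g"
  unfolding supdist_def by (simp add: abs_minus_commute)

lemma Dnorm_nonneg:
  assumes gen: "generator N Z m" and f: "E01 f"
  shows "0 \<le> Dnorm N Z f"
  unfolding Dnorm_FF
  by (rule integral_nonneg_AE) (use AE_space FF_nonneg[OF gen _ f] in \<open>auto elim: AE_mp\<close>)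

lemma Dnorm_lip:
  assumes gen: "generator N Z m" and f: "E01 f" and g: "E01 g"
  shows "Dnorm N Z g \<le> Dnorm N Z f + supdist g f * m"
proof -
  interpret prob_space N using gen_facts(1)[OF gen] .
  have "integral\<^sup>L N (FF Z g) \<le> integral\<^sup>L N (\<lambda>\<omega>. FF Z f \<omega> + supdist g f * m)"
  proof (rule integral_mono_AE)
    show "integrable N (FF Z g)" by (rule FF_integrable[OF gen g])
    show "integrable N (\<lambda>\<omega>. FF Z f \<omega> + supdist g f * m)"
      using FF_integrable[OF gen f] by simp
    show "AE x in N. FF Z g x \<le> FF Z f x + supdist g f * m"
      using gen_facts(5)[OF gen] AE_space
    proof eventually_elim
      case (elim \<omega>)
      then show ?case using FF_lip[OF gen _ f g, of \<omega>] by simp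
    qed
  qed
  also have "\<dots> = integral\<^sup>L N (FF Z f) + supdist g f * m"
    using FF_integrable[OF gen f] by (simp add: prob_space)
  finally show ?thesis unfolding Dnorm_FF .
qed

lemma G_lip:
  assumes gen: "generator N Z m" and f: "E01 f" and g: "E01 g"
  shows "\<bar>exp (- Dnorm N Z g) - exp (- Dnorm N Z f)\<bar> \<le> supdist g f * m"
proof -
  have "\<bar>exp (- Dnorm N Z g) - exp (- Dnorm N Z f)\<bar> \<le> \<bar>Dnorm N Z g - Dnorm N Z f\<bar>"
    by (intro exp_lip Dnorm_nonneg[OF gen] f g)
  also have "\<dots> \<le> supdist g f * m"
    using Dnorm_lip[OF gen f g] Dnorm_lip[OF gen g f] supdist_sym[of g f] by auto
  finally show ?thesis .
qed


lemma Eneg_shift: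
  assumes f: "f \<in> Eneg" and c: "c \<ge> 0"
  shows "(\<lambda>t. f t - c) \<in> Eneg"
proof -
  have E: "E01 f" and nf: "\<forall>t\<in>{0..1}. f t \<le> 0" using f unfolding Eneg_def by auto
  obtain B where B: "\<forall>x\<in>{0..1}. \<bar>f x\<bar> \<le> B" using E unfolding E01_def by (auto simp: bounded_iff)
  have bd: "bounded ((\<lambda>t. f t - c) ` {0..1})"
    unfolding bounded_iff using B c by (intro exI[of _ "B + c"]) auto
  have ceq: "continuous (at t within {0..1}) (\<lambda>t. f t - c) \<longleftrightarrow> continuous (at t within {0..1}) f" for t
  proof
    assume "continuous (at t within {0..1}) (\<lambda>t. f t - c)"
    then have "continuous (at t within {0..1}) (\<lambda>s. (f s - c) + c)"
      by (intro continuous_add continuous_const)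
    then show "continuous (at t within {0..1}) f" by simp
  qed (intro continuous_diff continuous_const)
  show ?thesis unfolding Eneg_def E01_def using bd E nf c ceq unfolding E01_def by auto
qed

lemma supdist_shift:
  assumes "c \<ge> 0"
  shows "supdist (\<lambda>t. f t - c) f = c"
  unfolding supdist_def using assms by simp

lemma Cneg_bounded: "g \<in> Cneg \<Longrightarrow> bounded (g ` {0..1})"
  unfolding Cneg_def by (intro compact_imp_bounded compact_continuous_image) auto

lemma boundary_char:
  assumes g: "g \<in> Cneg"
  shows "g \<in> rel_boundary_sup Cneg {h\<in>Cneg. \<forall>t\<in>{0..1}. h t \<le> f t} \<longleftrightarrow>
    (\<forall>t\<in>{0..1}. g t \<le> f t) \<and> (\<forall>e>0. \<exists>t\<in>{0..1}. f t < 0 \<and> f t < g t + e)"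
  (is "?L \<longleftrightarrow> ?A \<and> ?B")
proof
  assume L: ?L
  show "?A \<and> ?B"
  proof
    show ?A
    proof
      fix t :: real assume t: "t \<in> {0..1}"
      show "g t \<le> f t"
      proof (rule field_le_epsilon)
        fix e :: real assume e: "e > 0"
        obtain h where h: "h \<in> Cneg" "\<forall>t\<in>{0..1}. h t \<le> f t" "supdist g h < e"
          using L e unfolding rel_boundary_sup_def by blast
        have "\<bar>g t - h t\<bar> \<le> supdist g h" using supdist_bound[OF Cneg_bounded[OF g] Cneg_bounded[OF h(1)] t] .
        moreover have "h t \<le> f t" using h(2) t by auto
        ultimately show "g t \<le> f t + e" using h(3) by auto
      qed
    qed
    show ?B
    proof (intro allI impI)
      fix e :: real assume e: "e > 0"
      obtain h where h: "h \<in> Cneg" "\<not> (\<forall>t\<in>{0..1}. h t \<le> f t)" "supdist g h < e"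
        using L e unfolding rel_boundary_sup_def by blast
      then obtain t where t: "t \<in> {0..1}" "f t < h t" by auto
      have "\<bar>g t - h t\<bar> \<le> supdist g h" using supdist_bound[OF Cneg_bounded[OF g] Cneg_bounded[OF h(1)] t(1)] .
      moreover have "h t \<le> 0" using h(1) t(1) unfolding Cneg_def by auto
      ultimately show "\<exists>t\<in>{0..1}. f t < 0 \<and> f t < g t + e" using t h(3) by (intro bexI[of _ t]) auto
    qed
  qed
next
  assume R: "?A \<and> ?B"
  have gA: "g \<in> Cneg \<inter> {h\<in>Cneg. \<forall>t\<in>{0..1}. h t \<le> f t}" using g R by auto
  show ?L unfolding rel_boundary_sup_def
  proof (intro CollectI conjI allI impI g)
    fix e :: real assume e: "e > 0"
    show "\<exists>h\<in>Cneg \<inter> {h\<in>Cneg. \<forall>t\<in>{0..1}. h t \<le> f t}. supdist g h < e"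
      using gA e by (intro bexI[of _ g]) (auto simp: supdist_def)
    obtain t where t: "t \<in> {0..1}" "f t < 0" "f t < g t + e" using R e by blast
    define c where "c = (max (f t - g t) 0 + e) / 2"
    have c: "0 < c" "c < e" "f t - g t < c" using t e unfolding c_def by auto
    define h where "h = (\<lambda>s. min (g s + c) 0)"
    have hC: "h \<in> Cneg" using g unfolding h_def Cneg_def
      by (auto intro!: continuous_on_min continuous_on_add continuous_on_const)
    have hn: "\<not> (\<forall>t\<in>{0..1}. h t \<le> f t)" using t c unfolding h_def by (intro notI) (drule bspec[of _ _ t], auto)
    have "supdist g h \<le> c" unfolding supdist_def
    proof (rule cSUP_least)
      fix s :: real assume s: "s \<in> {0..1}"
      have "g s \<le> 0" using g s unfolding Cneg_def by auto
      then show "\<bar>g s - h s\<bar> \<le> c" unfolding h_def using c by auto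
    qed auto
    then show "\<exists>h\<in>Cneg - {h\<in>Cneg. \<forall>t\<in>{0..1}. h t \<le> f t}. supdist g h < e"
      using hC hn c by (intro bexI[of _ h]) auto
  qed
qed


lemma msp_facts:
  assumes "std_max_stable M eta N Z"
  shows "prob_space M" "\<And>t. t \<in> {0..1} \<Longrightarrow> (\<lambda>\<omega>. eta \<omega> t) \<in> borel_measurable M"
    "\<And>\<omega>. \<omega> \<in> space M \<Longrightarrow> eta \<omega> \<in> Cneg"
  using assms unfolding std_max_stable_def by auto

lemma pt_lt_sets:
  fixes eta :: "'a \<Rightarrow> real \<Rightarrow> real" and c :: real
  assumes "(\<lambda>\<omega>. eta \<omega> t) \<in> borel_measurable M"
  shows "{\<omega>\<in>space M. eta \<omega> t < c} \<in> sets M" "{\<omega>\<in>space M. eta \<omega> t \<le> c} \<in> sets M"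
    "{\<omega>\<in>space M. c < eta \<omega> t} \<in> sets M"
proof -
  have "(\<lambda>\<omega>. eta \<omega> t) -` {..<c} \<inter> space M \<in> sets M" by (rule measurable_sets[OF assms]) (rule lessThan_borel atMost_borel greaterThan_borel)
  moreover have "(\<lambda>\<omega>. eta \<omega> t) -` {..c} \<inter> space M \<in> sets M" by (rule measurable_sets[OF assms]) (rule lessThan_borel atMost_borel greaterThan_borel)
  moreover have "(\<lambda>\<omega>. eta \<omega> t) -` {c<..} \<inter> space M \<in> sets M" by (rule measurable_sets[OF assms]) (rule lessThan_borel atMost_borel greaterThan_borel)
  ultimately show "{\<omega>\<in>space M. eta \<omega> t < c} \<in> sets M" "{\<omega>\<in>space M. eta \<omega> t \<le> c} \<in> sets M"
    "{\<omega>\<in>space M. c < eta \<omega> t} \<in> sets M" by (auto simp: vimage_def Int_def conj_commute)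
qed

lemma lt_char:
  fixes g f :: "real \<Rightarrow> real"
  assumes g: "continuous_on {0..1} g" and f: "E01 f"
  assumes D_def: "D = {t \<in> {0..1}. \<not> continuous (at t within {0..1}) f}"
  assumes Good_def: "Good = {(a,b). a \<in> \<rat> \<and> b \<in> \<rat> \<and> max a 0 < min b 1 \<and> {max a 0..min b 1} \<inter> D = {}}"
  shows "(\<forall>t\<in>{0..1}. g t < f t) \<longleftrightarrow>
    (\<forall>t\<in>D. g t < f t) \<and> (\<forall>p\<in>Good. \<exists>q\<in>\<rat> \<inter> {0<..}. \<forall>s\<in>\<rat> \<inter> {max (fst p) 0..min (snd p) 1}. g s \<le> f s - q)"
proof
  assume L: "\<forall>t\<in>{0..1}. g t < f t"
  show "(\<forall>t\<in>D. g t < f t) \<and> (\<forall>p\<in>Good. \<exists>q\<in>\<rat> \<inter> {0<..}. \<forall>s\<in>\<rat> \<inter> {max (fst p) 0..min (snd p) 1}. g s \<le> f s - q)"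
  proof (intro conjI ballI)
    fix t assume "t \<in> D" then show "g t < f t" using L unfolding D_def by auto
  next
    fix p assume p: "p \<in> Good"
    obtain a b where ab: "p = (a,b)" by force
    let ?I = "{max a 0..min b 1}"
    have I: "?I \<subseteq> {0..1}" "?I \<noteq> {}" "?I \<inter> D = {}" using p ab unfolding Good_def by auto
    have "continuous_on ?I (\<lambda>s. f s - g s)"
    proof (rule continuous_on_eq_continuous_within[THEN iffD2], intro ballI)
      fix s assume s: "s \<in> ?I"
      then have s01: "s \<in> {0..1}" using I by auto
      then have "continuous (at s within {0..1}) f" using s I(3) unfolding D_def by auto
      moreover have "continuous (at s within {0..1}) g" using g s01 by (simp add: continuous_on_eq_continuous_within)
      ultimately have "continuous (at s within {0..1}) (\<lambda>s. f s - g s)" by (intro continuous_diff)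
      then show "continuous (at s within ?I) (\<lambda>s. f s - g s)" using I(1) by (rule continuous_within_subset)
    qed
    then obtain t0 where t0: "t0 \<in> ?I" "\<And>s. s \<in> ?I \<Longrightarrow> f t0 - g t0 \<le> f s - g s"
      using continuous_attains_inf[of ?I "\<lambda>s. f s - g s"] I(2) by auto
    have "0 < f t0 - g t0" using L t0(1) I(1) by auto
    then obtain q where q: "q \<in> \<rat>" "0 < q" "q < f t0 - g t0" using Rats_dense_in_real[of 0 "f t0 - g t0"] by auto
    show "\<exists>q\<in>\<rat> \<inter> {0<..}. \<forall>s\<in>\<rat> \<inter> {max (fst p) 0..min (snd p) 1}. g s \<le> f s - q"
    proof (intro bexI[of _ q] ballI)
      fix s assume "s \<in> \<rat> \<inter> {max (fst p) 0..min (snd p) 1}"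
      then have "s \<in> ?I" using ab by auto
      then show "g s \<le> f s - q" using t0(2)[of s] q by auto
    qed (use q in auto)
  qed
next
  assume R: "(\<forall>t\<in>D. g t < f t) \<and> (\<forall>p\<in>Good. \<exists>q\<in>\<rat> \<inter> {0<..}. \<forall>s\<in>\<rat> \<inter> {max (fst p) 0..min (snd p) 1}. g s \<le> f s - q)"
  show "\<forall>t\<in>{0..1}. g t < f t"
  proof
    fix t :: real assume t: "t \<in> {0..1}"
    show "g t < f t"
    proof (cases "t \<in> D")
      case True then show ?thesis using R by auto
    next
      case False
      have fD: "finite D" using f unfolding E01_def D_def by auto
      obtain \<epsilon> where eps: "\<epsilon> > 0" "\<forall>x\<in>D. x \<noteq> t \<longrightarrow> \<epsilon> \<le> dist t x"
        using finite_set_avoid[OF fD, of t] by auto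
      obtain a where a: "a \<in> \<rat>" "t - \<epsilon> < a" "a < t" using Rats_dense_in_real[of "t - \<epsilon>" t] eps by auto
      obtain b where b: "b \<in> \<rat>" "t < b" "b < t + \<epsilon>" using Rats_dense_in_real[of t "t + \<epsilon>"] eps by auto
      have lohi: "max a 0 < min b 1" using a b t by auto
      have disj: "{max a 0..min b 1} \<inter> D = {}"
      proof (rule ccontr)
        assume "{max a 0..min b 1} \<inter> D \<noteq> {}"
        then obtain x where x0: "x \<in> D" "x \<in> {max a 0..min b 1}" by blast
        then have x: "x \<in> D" "max a 0 \<le> x" "x \<le> min b 1" by simp_all
        then have "x \<noteq> t" using False by auto
        then have "\<epsilon> \<le> dist t x" using eps x by auto
        moreover have "dist t x < \<epsilon>" using x a b by (auto simp: dist_real_def)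
        ultimately show False by simp
      qed
      have "(a,b) \<in> Good" unfolding Good_def using a b lohi disj by auto
      then obtain q where q: "q \<in> \<rat>" "0 < q" "\<forall>s\<in>\<rat> \<inter> {max a 0..min b 1}. g s \<le> f s - q"
        using R by fastforce
      have tI: "t \<in> {max a 0..min b 1}" using a b t by auto
      show ?thesis
      proof (rule ccontr)
        assume "\<not> g t < f t"
        then have "(\<lambda>s. f s - g s) t < q" using q by auto
        moreover have "continuous (at t within {0..1}) (\<lambda>s. f s - g s)"
        proof (intro continuous_diff)
          show "continuous (at t within {0..1}) f" using False t unfolding D_def by auto
          show "continuous (at t within {0..1}) g" using g t by (simp add: continuous_on_eq_continuous_within)
        qed
        ultimately obtain s where "s \<in> \<rat>" "s \<in> {max a 0..min b 1}" "f s - g s < q"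
          using cont_rat[of t "{0..1}" "\<lambda>s. f s - g s" "max a 0" "min b 1" q] lohi tI by auto
        then show False using q(3) by force
      qed
    qed
  qed
qed

lemma lt_sets:
  assumes msp: "std_max_stable M eta N Z" and f: "f \<in> Eneg"
  shows "{\<omega>\<in>space M. \<forall>t\<in>{0..1}. eta \<omega> t < f t} \<in> sets M"
proof -
  have E: "E01 f" using f unfolding Eneg_def by auto
  define D where "D = {t \<in> {0..1}. \<not> continuous (at t within {0..1}) f}"
  define Good where "Good = {(a,b). a \<in> \<rat> \<and> b \<in> \<rat> \<and> max a 0 < min b 1 \<and> {max a 0..min b 1} \<inter> D = {}}"
  have eq: "{\<omega>\<in>space M. \<forall>t\<in>{0..1}. eta \<omega> t < f t} =
    {\<omega>\<in>space M. (\<forall>t\<in>D. eta \<omega> t < f t) \<and> (\<forall>p\<in>Good. \<exists>q\<in>\<rat> \<inter> {0<..}. \<forall>s\<in>\<rat> \<inter> {max (fst p) 0..min (snd p) 1}. eta \<omega> s \<le> f s - q)}"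
  proof (rule Collect_cong)
    fix \<omega>
    show "(\<omega> \<in> space M \<and> (\<forall>t\<in>{0..1}. eta \<omega> t < f t)) =
      (\<omega> \<in> space M \<and> (\<forall>t\<in>D. eta \<omega> t < f t) \<and> (\<forall>p\<in>Good. \<exists>q\<in>\<rat> \<inter> {0<..}. \<forall>s\<in>\<rat> \<inter> {max (fst p) 0..min (snd p) 1}. eta \<omega> s \<le> f s - q))"
    proof (cases "\<omega> \<in> space M")
      case True
      then have "continuous_on {0..1} (eta \<omega>)" using msp_facts(3)[OF msp] unfolding Cneg_def by auto
      then show ?thesis using lt_char[OF _ E D_def Good_def] True by blast
    qed simp
  qed
  have fD: "finite D" using E unfolding E01_def D_def by auto
  have cG: "countable Good"
    by (rule countable_subset[of _ "\<rat> \<times> \<rat>"]) (auto simp: Good_def intro: countable_SIGMA countable_rat)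
  have cQ: "countable (\<rat> \<inter> A)" for A :: "real set" by (rule countable_subset[OF _ countable_rat]) auto
  show ?thesis unfolding eq
  proof (intro sets.sets_Collect_conj sets.sets_Collect_countable_All' sets.sets_Collect_countable_Ex' cG cQ countable_finite fD)
    fix t assume "t \<in> D"
    then show "{\<omega>\<in>space M. eta \<omega> t < f t} \<in> sets M"
      using msp_facts(2)[OF msp] unfolding D_def by (intro pt_lt_sets) auto
  next
    fix p :: "real \<times> real" and q s :: real assume "s \<in> \<rat> \<inter> {max (fst p) 0..min (snd p) 1}"
    then have "s \<in> {0..1}" using max.cobounded2[of 0 "fst p"] min.cobounded2[of 1 "snd p"] by auto
    then show "{\<omega>\<in>space M. eta \<omega> s \<le> f s - q} \<in> sets M"
      using msp_facts(2)[OF msp] by (intro pt_lt_sets) auto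
  qed
qed


lemma bd_char2:
  fixes g f :: "real \<Rightarrow> real"
  assumes g: "continuous_on {0..1} g"
    and R_def: "R = (\<rat> \<inter> {0..1}) \<union> {t \<in> {0..1}. \<not> continuous (at t within {0..1}) f}"
  shows "(\<forall>e>0. \<exists>t\<in>{0..1}. f t < 0 \<and> f t < g t + e) \<longleftrightarrow>
    (\<forall>n::nat. \<exists>t\<in>R. f t < 0 \<and> f t < g t + inverse (real (Suc n)))"
proof
  assume L: "\<forall>e>0. \<exists>t\<in>{0..1}. f t < 0 \<and> f t < g t + e"
  show "\<forall>n::nat. \<exists>t\<in>R. f t < 0 \<and> f t < g t + inverse (real (Suc n))"
  proof
    fix n :: nat
    define e where "e = inverse (real (Suc n))"
    have e: "e > 0" unfolding e_def by simp
    obtain t where t: "t \<in> {0..1}" "f t < 0" "f t < g t + e" using L e by blast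
    show "\<exists>t\<in>R. f t < 0 \<and> f t < g t + inverse (real (Suc n))"
    proof (cases "continuous (at t within {0..1}) f")
      case False
      then have "t \<in> R" using t R_def by auto
      then show ?thesis using t unfolding e_def by blast
    next
      case True
      have gc: "continuous (at t within {0..1}) g" using g t by (simp add: continuous_on_eq_continuous_within)
      have "continuous (at t within {0..1}) (\<lambda>s. max (f s) (f s - g s - e))"
        using True gc by (intro continuous_max continuous_diff continuous_const)
      moreover have "(\<lambda>s. max (f s) (f s - g s - e)) t < 0" using t by auto
      ultimately obtain s where s: "s \<in> \<rat>" "s \<in> {0..1}" "max (f s) (f s - g s - e) < 0"
        using cont_rat[of t "{0..1}" "\<lambda>s. max (f s) (f s - g s - e)" 0 1 0] t by auto
      then have "s \<in> R" using R_def by auto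
      then show ?thesis using s unfolding e_def by (intro bexI[of _ s]) auto
    qed
  qed
next
  assume R: "\<forall>n::nat. \<exists>t\<in>R. f t < 0 \<and> f t < g t + inverse (real (Suc n))"
  show "\<forall>e>0. \<exists>t\<in>{0..1}. f t < 0 \<and> f t < g t + e"
  proof (intro allI impI)
    fix e :: real assume e: "e > 0"
    obtain n :: nat where n: "n > 0" "inverse (real n) < e" using ex_inverse_of_nat_less[OF e] by auto
    then have n': "inverse (real (Suc (n - 1))) < e" by simp
    obtain t where "t \<in> R" "f t < 0" "f t < g t + inverse (real (Suc (n - 1)))" using R by blast
    moreover then have "t \<in> {0..1}" using R_def by auto
    ultimately show "\<exists>t\<in>{0..1}. f t < 0 \<and> f t < g t + e" using n' by (intro bexI[of _ t]) auto
  qed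
qed


theorem mainTheorem4:
  fixes M :: "'a measure" and eta :: "'a \<Rightarrow> real \<Rightarrow> real"
    and N :: "'b measure" and Z :: "'b \<Rightarrow> real \<Rightarrow> real" and m :: real
    and G :: "(real \<Rightarrow> real) \<Rightarrow> real"
  assumes gen: "generator N Z m"
    and msp: "std_max_stable M eta N Z"
    and fdf: "\<And>f. f \<in> Eneg \<Longrightarrow>
               measure M {\<omega>\<in>space M. \<forall>t\<in>{0..1}. eta \<omega> t \<le> f t} = exp (- Dnorm N Z f)"
    and G_def: "\<And>f. G f = measure M {\<omega>\<in>space M. \<forall>t\<in>{0..1}. eta \<omega> t \<le> f t}"
  shows "(\<forall>f\<in>Eneg. \<forall>e>0. \<exists>\<delta>>0. \<forall>g\<in>Eneg. supdist g f < \<delta> \<longrightarrow> \<bar>G g - G f\<bar> < e)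
       \<and> (\<forall>f\<in>Eneg. {\<omega>\<in>space M. \<forall>t\<in>{0..1}. eta \<omega> t < f t} \<in> sets M
             \<and> measure M {\<omega>\<in>space M. \<forall>t\<in>{0..1}. eta \<omega> t \<le> f t}
               = measure M {\<omega>\<in>space M. \<forall>t\<in>{0..1}. eta \<omega> t < f t})
       \<and> (\<forall>f\<in>Eneg.
             {\<omega>\<in>space M. eta \<omega> \<in> rel_boundary_sup Cneg {g\<in>Cneg. \<forall>t\<in>{0..1}. g t \<le> f t}} \<in> sets M
           \<and> measure M {\<omega>\<in>space M. eta \<omega> \<in> rel_boundary_sup Cneg {g\<in>Cneg. \<forall>t\<in>{0..1}. g t \<le> f t}} = 0)"
proof -
  interpret M: prob_space M using msp_facts(1)[OF msp] .
  have E: "E01 f" if "f \<in> Eneg" for f using that unfolding Eneg_def by auto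
  have m: "m \<ge> 1" using gen_facts(2)[OF gen] .
  have le_sets: "{\<omega>\<in>space M. \<forall>t\<in>{0..1}. eta \<omega> t \<le> f t} \<in> sets M" if f: "f \<in> Eneg" for f
  proof (rule ccontr)
    assume "\<not> ?thesis"
    then have "measure M {\<omega>\<in>space M. \<forall>t\<in>{0..1}. eta \<omega> t \<le> f t} = 0" by (rule measure_notin_sets)
    then show False using fdf[OF f] by simp
  qed
  have P1: "\<forall>f\<in>Eneg. \<forall>e>0. \<exists>\<delta>>0. \<forall>g\<in>Eneg. supdist g f < \<delta> \<longrightarrow> \<bar>G g - G f\<bar> < e"
  proof (intro ballI allI impI)
    fix f e assume f: "f \<in> Eneg" and e: "(e::real) > 0"
    show "\<exists>\<delta>>0. \<forall>g\<in>Eneg. supdist g f < \<delta> \<longrightarrow> \<bar>G g - G f\<bar> < e"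
    proof (intro exI[of _ "e / m"] conjI ballI impI)
      show "e / m > 0" using e m by simp
      fix g assume g: "g \<in> Eneg" and d: "supdist g f < e / m"
      have "\<bar>G g - G f\<bar> \<le> supdist g f * m"
        unfolding G_def fdf[OF f] fdf[OF g] by (rule G_lip[OF gen E[OF f] E[OF g]])
      also have "\<dots> < e / m * m" using d m by (intro mult_strict_right_mono) auto
      also have "\<dots> = e" using m by simp
      finally show "\<bar>G g - G f\<bar> < e" .
    qed
  qed
  have shift: "\<exists>\<epsilon>>0. (\<lambda>t. f t - \<epsilon>) \<in> Eneg \<and> G f - G (\<lambda>t. f t - \<epsilon>) < e"
    if f: "f \<in> Eneg" and e: "e > 0" for f e
  proof -
    obtain \<delta> where \<delta>: "\<delta> > 0" "\<And>g. g \<in> Eneg \<Longrightarrow> supdist g f < \<delta> \<Longrightarrow> \<bar>G g - G f\<bar> < e"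
      using P1 f e by blast
    have g: "(\<lambda>t. f t - \<delta>/2) \<in> Eneg" using Eneg_shift[OF f, of "\<delta>/2"] \<delta> by simp
    have "supdist (\<lambda>t. f t - \<delta>/2) f < \<delta>" using supdist_shift[of "\<delta>/2" f] \<delta> by simp
    then have "\<bar>G (\<lambda>t. f t - \<delta>/2) - G f\<bar> < e" using \<delta>(2) g by blast
    then show ?thesis using g \<delta> by (intro exI[of _ "\<delta>/2"]) auto
  qed
  have P2: "\<forall>f\<in>Eneg. {\<omega>\<in>space M. \<forall>t\<in>{0..1}. eta \<omega> t < f t} \<in> sets M
             \<and> measure M {\<omega>\<in>space M. \<forall>t\<in>{0..1}. eta \<omega> t \<le> f t}
               = measure M {\<omega>\<in>space M. \<forall>t\<in>{0..1}. eta \<omega> t < f t}"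
  proof
    fix f assume f: "f \<in> Eneg"
    let ?A = "{\<omega>\<in>space M. \<forall>t\<in>{0..1}. eta \<omega> t \<le> f t}"
    let ?B = "{\<omega>\<in>space M. \<forall>t\<in>{0..1}. eta \<omega> t < f t}"
    have B: "?B \<in> sets M" by (rule lt_sets[OF msp f])
    have "measure M ?B \<le> measure M ?A"
      using le_sets[OF f] by (intro M.finite_measure_mono) auto
    moreover have "measure M ?A \<le> measure M ?B"
    proof (rule field_le_epsilon)
      fix e :: real assume e: "e > 0"
      obtain \<epsilon> where \<epsilon>: "\<epsilon> > 0" "(\<lambda>t. f t - \<epsilon>) \<in> Eneg" "G f - G (\<lambda>t. f t - \<epsilon>) < e"
        using shift[OF f e] by blast
      have "G (\<lambda>t. f t - \<epsilon>) \<le> measure M ?B"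
        unfolding G_def using B \<epsilon>(1) by (intro M.finite_measure_mono) auto
      then show "measure M ?A \<le> measure M ?B + e" using \<epsilon>(3) unfolding G_def by simp
    qed
    ultimately show "?B \<in> sets M \<and> measure M ?A = measure M ?B" using B by simp
  qed
  have P3: "\<forall>f\<in>Eneg.
             {\<omega>\<in>space M. eta \<omega> \<in> rel_boundary_sup Cneg {g\<in>Cneg. \<forall>t\<in>{0..1}. g t \<le> f t}} \<in> sets M
           \<and> measure M {\<omega>\<in>space M. eta \<omega> \<in> rel_boundary_sup Cneg {g\<in>Cneg. \<forall>t\<in>{0..1}. g t \<le> f t}} = 0"
  proof
    fix f assume f: "f \<in> Eneg"
    define R where "R = (\<rat> \<inter> {0..1}) \<union> {t \<in> {0..1}. \<not> continuous (at t within {0..1}) f}"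
    let ?A = "{\<omega>\<in>space M. \<forall>t\<in>{0..1}. eta \<omega> t \<le> f t}"
    let ?Bd = "{\<omega>\<in>space M. eta \<omega> \<in> rel_boundary_sup Cneg {g\<in>Cneg. \<forall>t\<in>{0..1}. g t \<le> f t}}"
    have bdc: "\<omega> \<in> ?Bd \<longleftrightarrow> \<omega> \<in> space M \<and> (\<forall>t\<in>{0..1}. eta \<omega> t \<le> f t) \<and> (\<forall>e>0. \<exists>t\<in>{0..1}. f t < 0 \<and> f t < eta \<omega> t + e)" for \<omega>
      using boundary_char[OF msp_facts(3)[OF msp], of \<omega> f] by auto
    have eq: "?Bd = {\<omega>\<in>space M. (\<forall>t\<in>{0..1}. eta \<omega> t \<le> f t) \<and> (\<forall>n::nat. \<exists>t\<in>R. f t < 0 \<and> f t < eta \<omega> t + inverse (real (Suc n)))}"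
    proof (intro set_eqI)
      fix \<omega>
      show "\<omega> \<in> ?Bd \<longleftrightarrow> \<omega> \<in> {\<omega>\<in>space M. (\<forall>t\<in>{0..1}. eta \<omega> t \<le> f t) \<and> (\<forall>n::nat. \<exists>t\<in>R. f t < 0 \<and> f t < eta \<omega> t + inverse (real (Suc n)))}"
      proof (cases "\<omega> \<in> space M")
        case True
        then have "continuous_on {0..1} (eta \<omega>)" using msp_facts(3)[OF msp] unfolding Cneg_def by auto
        then show ?thesis using bd_char2[OF _ R_def] bdc[of \<omega>] True by simp
      qed (use bdc in auto)
    qed
    have cR: "countable R" unfolding R_def using E[OF f] unfolding E01_def
      by (intro countable_Un countable_finite countable_subset[OF _ countable_rat]) auto
    have sB: "?Bd \<in> sets M" unfolding eq
    proof (rule sets.sets_Collect_conj[OF _ le_sets[OF f]], rule sets.sets_Collect_countable_All,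
        rule sets.sets_Collect_countable_Ex'[OF _ cR])
      fix n :: nat and t assume t: "t \<in> R"
      then have t01: "t \<in> {0..1}" unfolding R_def by auto
      have "{\<omega>\<in>space M. f t < 0 \<and> f t < eta \<omega> t + inverse (real (Suc n))} =
        (if f t < 0 then {\<omega>\<in>space M. f t - inverse (real (Suc n)) < eta \<omega> t} else {})" by auto
      then show "{\<omega>\<in>space M. f t < 0 \<and> f t < eta \<omega> t + inverse (real (Suc n))} \<in> sets M"
        using pt_lt_sets(3)[of eta t M, OF msp_facts(2)[OF msp t01]] by simp
    qed
    have "measure M ?Bd \<le> 0"
    proof (rule field_le_epsilon)
      fix e :: real assume e: "e > 0"
      obtain \<epsilon> where \<epsilon>: "\<epsilon> > 0" "(\<lambda>t. f t - \<epsilon>) \<in> Eneg" "G f - G (\<lambda>t. f t - \<epsilon>) < e"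
        using shift[OF f e] by blast
      let ?C = "{\<omega>\<in>space M. \<forall>t\<in>{0..1}. eta \<omega> t \<le> f t - \<epsilon>}"
      have sub: "?Bd \<subseteq> ?A - ?C"
      proof
        fix \<omega> assume "\<omega> \<in> ?Bd"
        then have w: "\<omega> \<in> space M" "\<forall>t\<in>{0..1}. eta \<omega> t \<le> f t" "\<exists>t\<in>{0..1}. f t < 0 \<and> f t < eta \<omega> t + \<epsilon>"
          using bdc \<epsilon>(1) by auto
        then obtain t where "t \<in> {0..1}" "f t < eta \<omega> t + \<epsilon>" by blast
        then show "\<omega> \<in> ?A - ?C" using w by force
      qed
      have "measure M ?Bd \<le> measure M (?A - ?C)"
        using sub le_sets[OF f] le_sets[OF \<epsilon>(2)] by (intro M.finite_measure_mono) auto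
      also have "\<dots> = measure M ?A - measure M ?C"
        using le_sets[OF f] le_sets[OF \<epsilon>(2)] \<epsilon>(1) by (intro M.finite_measure_Diff) auto
      also have "\<dots> < e" using \<epsilon>(3) unfolding G_def by simp
      finally show "measure M ?Bd \<le> 0 + e" by simp
    qed
    then show "?Bd \<in> sets M \<and> measure M ?Bd = 0" using sB measure_nonneg[of M ?Bd] by simp
  qed
  show ?thesis using P1 P2 P3 by blast
qed

end
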